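(* Let $p \geqslant 3$ be a prime and $d \geqslant 1$ with $p^d \geqslant 7$, let $V$ be a $d$-dimensional vector space over $\mathbb{F}_p$ with basis $\mathbf{b}_1,\ldots,\mathbf{b}_d$, let $G = \mathrm{Sym}(V)$, and let $T \leqslant \mathrm{GL}(V)$ be the group of matrices diagonal with respect to this basis. Let $l_2 = d$ if $p \in \{3,5\}$ and $l_2 = d\,\Omega(p-1)$ otherwise. Then there exist subsets $Y_1,\ldots,Y_{l_2} \subseteq G$ such that \[ T > \bigcap_{x \in Y_1} T^x > \bigcap_{x \in Y_2} T^x > \cdots > \bigcap_{x \in Y_{l_2}} T^x = 1. \]
   Context: $\Omega(k)$ is the number of prime factors of $k$ counted with multiplicity. $\mathrm{GL}(V)$ is regarded as a subgroup of $\mathrm{Sym}(V)$; inclusions $>$ are strict. *)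

theory Defs
  imports "HOL-Algebra.Bij" "HOL-Computational_Algebra.Primes"
begin

definition bigOmega :: "nat \<Rightarrow> nat" where
  "bigOmega k = size (prime_factorization k)"

text \<open>V = F_p^d, vectors as coordinate functions nat => nat (coordinates in {0..<p}
  for indices < d, zero elsewhere); b_i is the i-th standard basis vector.\<close>
definition vecsp :: "nat \<Rightarrow> nat \<Rightarrow> (nat \<Rightarrow> nat) set" where
  "vecsp p d = {v. (\<forall>i<d. v i < p) \<and> (\<forall>i\<ge>d. v i = 0)}"

abbreviation SymV :: "nat \<Rightarrow> nat \<Rightarrow> ((nat \<Rightarrow> nat) \<Rightarrow> (nat \<Rightarrow> nat)) monoid" where
  "SymV p d \<equiv> BijGroup (vecsp p d)"

definition diagT :: "nat \<Rightarrow> nat \<Rightarrow> ((nat \<Rightarrow> nat) \<Rightarrow> (nat \<Rightarrow> nat)) set" where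
  "diagT p d = {(\<lambda>v\<in>vecsp p d. (\<lambda>i. (a i * v i) mod p)) | a. \<forall>i<d. 0 < a i \<and> a i < p}"

definition conjg :: "('a, 'b) monoid_scheme \<Rightarrow> 'a set \<Rightarrow> 'a \<Rightarrow> 'a set" where
  "conjg G H x = (\<lambda>h. inv\<^bsub>G\<^esub> x \<otimes>\<^bsub>G\<^esub> h \<otimes>\<^bsub>G\<^esub> x) ` H"

definition interconj :: "('a, 'b) monoid_scheme \<Rightarrow> 'a set \<Rightarrow> 'a set \<Rightarrow> 'a set" where
  "interconj G H Y = {g \<in> carrier G. \<forall>x\<in>Y. g \<in> conjg G H x}"

end

theory Submission
  imports Defs "HOL-Number_Theory.Number_Theory"
begin



definition dg :: "nat \<Rightarrow> nat \<Rightarrow> (nat \<Rightarrow> nat) \<Rightarrow> ((nat \<Rightarrow> nat) \<Rightarrow> (nat \<Rightarrow> nat))" where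
  "dg p d a = (\<lambda>v\<in>vecsp p d. (\<lambda>i. (a i * v i) mod p))"

definition cx :: "nat \<Rightarrow> nat \<Rightarrow> nat \<Rightarrow> (nat \<Rightarrow> nat) \<Rightarrow> ((nat \<Rightarrow> nat) \<Rightarrow> (nat \<Rightarrow> nat))" where
  "cx p d c f = (\<lambda>v\<in>vecsp p d. v(c := f (v c)))"

lemma diagT_dg: "diagT p d = {dg p d a | a. \<forall>i<d. 0 < a i \<and> a i < p}"
  unfolding diagT_def dg_def by simp

lemma finite_vecsp: "finite (vecsp p d)"
proof -
  have e: "vecsp p d = {f. \<forall>x. (x \<in> {..<d} \<longrightarrow> f x \<in> {..<p}) \<and> (x \<notin> {..<d} \<longrightarrow> f x = 0)}"
    unfolding vecsp_def by (auto simp: not_less)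
  show ?thesis unfolding e by (rule finite_set_of_finite_funs) auto
qed

lemma Bij_finite:
  assumes "finite S" "\<And>v. v \<in> S \<Longrightarrow> f v \<in> S" "inj_on f S" "f \<in> extensional S"
  shows "f \<in> Bij S"
proof -
  have "f ` S \<subseteq> S" using assms(2) by auto
  then have "f ` S = S" using endo_inj_surj[OF assms(1) _ assms(3)] by simp
  then show ?thesis using assms unfolding Bij_def bij_betw_def by auto
qed

lemma dg_in_vecsp:
  assumes "v \<in> vecsp p d" "p > 0"
  shows "(\<lambda>i. (a i * v i) mod p) \<in> vecsp p d"
  using assms unfolding vecsp_def by auto

lemma coprime_lt:
  assumes "prime p" "0 < x" "x < (p::nat)"
  shows "coprime x p"
proof -
  have "\<not> p dvd x" using assms(2,3) dvd_imp_le not_le by blast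
  then show ?thesis using prime_imp_coprime[OF assms(1)] coprime_commute by blast
qed

lemma dg_Bij:
  assumes "prime p" "\<forall>i<d. 0 < a i \<and> a i < p"
  shows "dg p d a \<in> Bij (vecsp p d)"
proof (rule Bij_finite[OF finite_vecsp])
  have p0: "p > 0" using assms prime_gt_0_nat by blast
  show "dg p d a v \<in> vecsp p d" if "v \<in> vecsp p d" for v
    using that dg_in_vecsp[OF that p0] unfolding dg_def by simp
  show "dg p d a \<in> extensional (vecsp p d)" unfolding dg_def by simp
  show "inj_on (dg p d a) (vecsp p d)"
  proof (rule inj_onI)
    fix v w assume v: "v \<in> vecsp p d" and w: "w \<in> vecsp p d" and eq: "dg p d a v = dg p d a w"
    show "v = w"
    proof
      fix i
      show "v i = w i"
      proof (cases "i < d")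
        case True
        have "(a i * v i) mod p = (a i * w i) mod p"
        proof -
          have "dg p d a v i = dg p d a w i" using eq by simp
          then show ?thesis using v w unfolding dg_def by simp
        qed
        then have "[a i * v i = a i * w i] (mod p)" by (simp add: cong_def)
        moreover have "coprime (a i) p" using assms True coprime_lt by blast
        ultimately have "[v i = w i] (mod p)"
          using cong_mult_lcancel_nat by blast
        moreover have "v i < p" "w i < p" using v w True unfolding vecsp_def by auto
        ultimately show ?thesis unfolding cong_def by simp
      next
        case False
        then show ?thesis using v w unfolding vecsp_def by simp
      qed
    qed
  qed
qed

lemma cx_Bij:
  assumes "c < d" "inj_on f {..<p}" "\<And>u. u < p \<Longrightarrow> f u < p"
  shows "cx p d c f \<in> Bij (vecsp p d)"
proof (rule Bij_finite[OF finite_vecsp])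
  show "cx p d c f v \<in> vecsp p d" if "v \<in> vecsp p d" for v
    using that assms unfolding cx_def vecsp_def by auto
  show "cx p d c f \<in> extensional (vecsp p d)" unfolding cx_def by simp
  show "inj_on (cx p d c f) (vecsp p d)"
  proof (rule inj_onI)
    fix v w assume v: "v \<in> vecsp p d" and w: "w \<in> vecsp p d" and eq: "cx p d c f v = cx p d c f w"
    then have eq2: "v(c := f (v c)) = w(c := f (w c))" unfolding cx_def by simp
    then have "f (v c) = f (w c)" by (metis fun_upd_same)
    moreover have "v c < p" "w c < p" using v w assms(1) unfolding vecsp_def by auto
    ultimately have "v c = w c" using assms(2) by (auto dest: inj_onD)
    then show "v = w" using eq2 by (metis fun_upd_triv fun_upd_upd)
  qed
qed


lemma conjg_iff:
  assumes "group G" "H \<subseteq> carrier G" "x \<in> carrier G" "g \<in> carrier G"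
  shows "g \<in> conjg G H x \<longleftrightarrow> (\<exists>h\<in>H. x \<otimes>\<^bsub>G\<^esub> g = h \<otimes>\<^bsub>G\<^esub> x)"
proof
  assume "g \<in> conjg G H x"
  then obtain h where h: "h \<in> H" "g = inv\<^bsub>G\<^esub> x \<otimes>\<^bsub>G\<^esub> h \<otimes>\<^bsub>G\<^esub> x"
    unfolding conjg_def by auto
  have hc: "h \<in> carrier G" using h assms by auto
  interpret group G by fact
  have "x \<otimes>\<^bsub>G\<^esub> g = h \<otimes>\<^bsub>G\<^esub> x"
    using h(2) hc assms by (simp add: m_assoc[symmetric])
  then show "\<exists>h\<in>H. x \<otimes>\<^bsub>G\<^esub> g = h \<otimes>\<^bsub>G\<^esub> x" using h by blast
next
  assume "\<exists>h\<in>H. x \<otimes>\<^bsub>G\<^esub> g = h \<otimes>\<^bsub>G\<^esub> x"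
  then obtain h where h: "h \<in> H" "x \<otimes>\<^bsub>G\<^esub> g = h \<otimes>\<^bsub>G\<^esub> x" by blast
  have hc: "h \<in> carrier G" using h assms by auto
  interpret group G by fact
  have "g = inv\<^bsub>G\<^esub> x \<otimes>\<^bsub>G\<^esub> (x \<otimes>\<^bsub>G\<^esub> g)" using assms by (simp add: m_assoc[symmetric])
  also have "\<dots> = inv\<^bsub>G\<^esub> x \<otimes>\<^bsub>G\<^esub> h \<otimes>\<^bsub>G\<^esub> x" using h(2) hc assms by (simp add: m_assoc)
  finally show "g \<in> conjg G H x" unfolding conjg_def using h by blast
qed

lemma Bij_mult: "f \<in> Bij S \<Longrightarrow> g \<in> Bij S \<Longrightarrow> f \<otimes>\<^bsub>BijGroup S\<^esub> g = compose S f g"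
  by (simp add: BijGroup_def)

lemma restrict_eq_iff: "((\<lambda>x\<in>S. A x) = (\<lambda>x\<in>S. B x)) \<longleftrightarrow> (\<forall>x\<in>S. A x = B x)"
  by (metis restrict_apply' restrict_ext)

lemma compose_eq_iff: "compose S f g = compose S h k \<longleftrightarrow> (\<forall>v\<in>S. f (g v) = h (k v))"
  unfolding compose_def by (rule restrict_eq_iff)

lemma diagT_sub: "prime p \<Longrightarrow> diagT p d \<subseteq> carrier (SymV p d)"
  unfolding diagT_dg by (auto simp: BijGroup_def intro: dg_Bij)

lemma conj_cx:
  assumes p: "prime p" and c: "c < d" and inj: "inj_on f {..<p}" and fp: "\<And>u. u < p \<Longrightarrow> f u < p"
    and a: "\<forall>i<d. 0 < a i \<and> a i < p"
  shows "dg p d a \<in> conjg (SymV p d) (diagT p d) (cx p d c f) \<longleftrightarrow>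
         (\<exists>b. 0 < b \<and> b < p \<and> (\<forall>u<p. f (a c * u mod p) = b * f u mod p))"
proof -
  let ?G = "SymV p d" and ?V = "vecsp p d"
  have p0: "p > 0" using p prime_gt_0_nat by blast
  have X: "cx p d c f \<in> Bij ?V" by (rule cx_Bij[OF c inj fp])
  have A: "dg p d a \<in> Bij ?V" by (rule dg_Bij[OF p a])
  have "dg p d a \<in> conjg ?G (diagT p d) (cx p d c f) \<longleftrightarrow>
     (\<exists>h\<in>diagT p d. cx p d c f \<otimes>\<^bsub>?G\<^esub> dg p d a = h \<otimes>\<^bsub>?G\<^esub> cx p d c f)"
    using conjg_iff[OF group_BijGroup diagT_sub[OF p, of d], of "cx p d c f" "dg p d a"] X A
    by (simp add: BijGroup_def)
  also have "\<dots> \<longleftrightarrow> (\<exists>b. (\<forall>i<d. 0 < b i \<and> b i < p) \<and>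
      (\<forall>v\<in>?V. cx p d c f (dg p d a v) = dg p d b (cx p d c f v)))"
  proof -
    have "cx p d c f \<otimes>\<^bsub>?G\<^esub> dg p d a = dg p d b \<otimes>\<^bsub>?G\<^esub> cx p d c f \<longleftrightarrow>
      (\<forall>v\<in>?V. cx p d c f (dg p d a v) = dg p d b (cx p d c f v))"
      if "\<forall>i<d. 0 < b i \<and> b i < p" for b
      unfolding Bij_mult[OF X A] Bij_mult[OF dg_Bij[OF p that] X] compose_eq_iff by (rule refl)
    then show ?thesis unfolding diagT_dg by blast
  qed
  also have "\<dots> \<longleftrightarrow> (\<exists>b. 0 < b \<and> b < p \<and> (\<forall>u<p. f (a c * u mod p) = b * f u mod p))"
  proof
    assume "\<exists>b. (\<forall>i<d. 0 < b i \<and> b i < p) \<and>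
      (\<forall>v\<in>?V. cx p d c f (dg p d a v) = dg p d b (cx p d c f v))"
    then obtain b where b: "\<forall>i<d. 0 < b i \<and> b i < p"
      and eq: "\<forall>v\<in>?V. cx p d c f (dg p d a v) = dg p d b (cx p d c f v)" by blast
    have "f (a c * u mod p) = b c * f u mod p" if u: "u < p" for u
    proof -
      define v where "v = (\<lambda>i. if i = c then u else 0)"
      have v: "v \<in> ?V" using u c unfolding v_def vecsp_def by auto
      have av: "dg p d a v = (\<lambda>i. (a i * v i) mod p)" using v unfolding dg_def by simp
      have av2: "(\<lambda>i. (a i * v i) mod p) \<in> ?V" by (rule dg_in_vecsp[OF v p0])
      have xv: "cx p d c f v = v(c := f (v c))" using v unfolding cx_def by simp
      have xv2: "v(c := f (v c)) \<in> ?V" using v c fp u unfolding vecsp_def v_def by auto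
      have "cx p d c f (dg p d a v) c = dg p d b (cx p d c f v) c" using eq v by simp
      moreover have "cx p d c f (dg p d a v) c = f (a c * u mod p)"
        using av av2 unfolding cx_def v_def by simp
      moreover have "dg p d b (cx p d c f v) c = b c * f u mod p"
        using xv xv2 unfolding dg_def v_def by simp
      ultimately show ?thesis by simp
    qed
    then show "\<exists>b. 0 < b \<and> b < p \<and> (\<forall>u<p. f (a c * u mod p) = b * f u mod p)"
      using b c by blast
  next
    assume "\<exists>b. 0 < b \<and> b < p \<and> (\<forall>u<p. f (a c * u mod p) = b * f u mod p)"
    then obtain b0 where b0: "0 < b0" "b0 < p" and eq: "\<forall>u<p. f (a c * u mod p) = b0 * f u mod p" by blast
    define b where "b = a(c := b0)"
    have b: "\<forall>i<d. 0 < b i \<and> b i < p" using a b0 unfolding b_def by auto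
    have "cx p d c f (dg p d a v) = dg p d b (cx p d c f v)" if v: "v \<in> ?V" for v
    proof -
      have av2: "(\<lambda>i. (a i * v i) mod p) \<in> ?V" by (rule dg_in_vecsp[OF v p0])
      have vc: "v c < p" using v c unfolding vecsp_def by auto
      have xv2: "v(c := f (v c)) \<in> ?V" using v c fp vc unfolding vecsp_def by auto
      have l: "cx p d c f (dg p d a v) = (\<lambda>i. (a i * v i) mod p)(c := f (a c * v c mod p))"
        using v av2 unfolding dg_def cx_def by simp
      have r: "dg p d b (cx p d c f v) = (\<lambda>i. (b i * (v(c := f (v c))) i) mod p)"
        using v xv2 unfolding dg_def cx_def by simp
      show ?thesis unfolding l r using eq vc by (auto simp: b_def fun_eq_iff)
    qed
    then show "\<exists>b. (\<forall>i<d. 0 < b i \<and> b i < p) \<and>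
      (\<forall>v\<in>?V. cx p d c f (dg p d a v) = dg p d b (cx p d c f v))" using b by blast
  qed
  finally show ?thesis .
qed



definition phi0 :: "nat \<Rightarrow> nat" where
  "phi0 u = (if u = 0 then 1 else if u = 1 then 0 else u)"

lemma phi0_perm: "p \<ge> 2 \<Longrightarrow> inj_on phi0 {..<p} \<and> (\<forall>u<p. phi0 u < p)"
  unfolding phi0_def inj_on_def by auto

lemma phi0_char:
  assumes "p \<ge> 2" "0 < a" "a < p"
  shows "(\<exists>b. 0 < b \<and> b < p \<and> (\<forall>u<p. phi0 (a * u mod p) = b * phi0 u mod p)) \<longleftrightarrow> [a ^ 1 = 1] (mod p)"
proof
  assume "\<exists>b. 0 < b \<and> b < p \<and> (\<forall>u<p. phi0 (a * u mod p) = b * phi0 u mod p)"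
  then obtain b where b: "0 < b" "b < p" and eq: "\<forall>u<p. phi0 (a * u mod p) = b * phi0 u mod p" by blast
  have "phi0 (a * 0 mod p) = b * phi0 0 mod p" using eq[rule_format, of 0] assms by simp
  then have "b = 1" using b by (simp add: phi0_def)
  have "phi0 (a * 1 mod p) = b * phi0 1 mod p" using eq[rule_format, of 1] assms by simp
  then have "phi0 a = 0" using assms by (simp add: phi0_def)
  then have "a = 1" using assms unfolding phi0_def by (auto split: if_splits)
  then show "[a ^ 1 = 1] (mod p)" by simp
next
  assume "[a ^ 1 = 1] (mod p)"
  then have "a = 1" using assms unfolding cong_def by simp
  moreover have "\<forall>u<p. phi0 (1 * u mod p) = 1 * phi0 u mod p"
    using phi0_perm[OF assms(1)] by simp
  ultimately show "\<exists>b. 0 < b \<and> b < p \<and> (\<forall>u<p. phi0 (a * u mod p) = b * phi0 u mod p)"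
    using assms by blast
qed


definition phi2 :: "nat \<Rightarrow> nat \<Rightarrow> nat" where
  "phi2 p u = (if u = 1 then p - 1 else if u = p - 1 then 1 else u)"

lemma phi2_perm: "p \<ge> 3 \<Longrightarrow> inj_on (phi2 p) {..<p} \<and> (\<forall>u<p. phi2 p u < p)"
  unfolding phi2_def inj_on_def by auto

lemma sq_one_iff:
  assumes "prime p" "0 < a" "a < (p::nat)"
  shows "[a ^ 2 = 1] (mod p) \<longleftrightarrow> a = 1 \<or> a = p - 1"
proof
  assume h: "[a ^ 2 = 1] (mod p)"
  have "a ^ 2 \<ge> 1" using assms(2) by (simp add: Suc_le_eq)
  then have d1: "p dvd a ^ 2 - 1" using h cong_altdef_nat by blast
  have e: "a ^ 2 - 1 = (a - 1) * (a + 1)" using assms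
    by (simp add: power2_eq_square algebra_simps)
  have "p dvd (a - 1) * (a + 1)" using d1 unfolding e .
  then have "p dvd (a - 1) \<or> p dvd (a + 1)" using prime_dvd_mult_nat[OF assms(1)] by blast
  then show "a = 1 \<or> a = p - 1"
  proof
    assume d: "p dvd a - 1"
    show ?thesis
    proof (rule ccontr)
      assume "\<not> ?thesis"
      then have "a - 1 > 0" using assms(2) by auto
      then have "p \<le> a - 1" using dvd_imp_le[OF d] by blast
      then show False using assms by simp
    qed
  next
    assume "p dvd a + 1" then have "p \<le> a + 1" using dvd_imp_le by auto
    then show ?thesis using assms by auto
  qed
next
  assume "a = 1 \<or> a = p - 1"
  then show "[a ^ 2 = 1] (mod p)"
  proof
    assume "a = 1" then show ?thesis by simp
  next
    assume a: "a = p - 1"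
    have "p \<ge> 2" using assms(1) prime_ge_2_nat by blast
    then obtain q where q: "p = q + 2" by (metis add.commute le_add_diff_inverse)
    have "(p - 1) ^ 2 = 1 + q * p" unfolding q by (simp add: power2_eq_square algebra_simps)
    then show ?thesis unfolding a cong_def by (simp only: mod_mult_self1)
  qed
qed

lemma neg_contra:
  assumes "prime (p::nat)" "p \<ge> 7" "0 < a" "a < p" "0 < u" "u < 5" "a * u mod p = (p - a) * u mod p"
  shows False
proof -
  have e0: "(p - a) * u + a * u = ((p - a) + a) * u" by (rule distrib_right[symmetric])
  have pa: "p - a + a = p" using assms(4) by arith
  have e: "(p - a) * u + a * u = p * u" unfolding e0 pa ..
  have "(a * u + a * u) mod p = (a * u mod p + a * u) mod p" by (rule mod_add_left_eq[symmetric])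
  also have "\<dots> = ((p - a) * u mod p + a * u) mod p" by (simp only: assms(7))
  also have "\<dots> = ((p - a) * u + a * u) mod p" by (rule mod_add_left_eq)
  also have "\<dots> = 0" unfolding e by simp
  finally have "p dvd 2 * (a * u)" by (simp add: mult_2 dvd_eq_mod_eq_0)
  then have "p dvd 2 \<or> p dvd a * u" using assms(1) prime_dvd_mult_nat by blast
  then have "p dvd 2 \<or> p dvd a \<or> p dvd u" using assms(1) prime_dvd_mult_nat by blast
  moreover have "\<not> p dvd 2" using assms(2) dvd_imp_le[of p 2] by auto
  moreover have "\<not> p dvd a" using assms(3,4) dvd_imp_le[of p a] by auto
  moreover have "\<not> p dvd u" using assms(2,5,6) dvd_imp_le[of p u] by auto
  ultimately show False by blast
qed
lemma phi2_char:
  assumes p: "prime p" "p \<ge> 7" and a: "0 < a" "a < p"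
  shows "(\<exists>b. 0 < b \<and> b < p \<and> (\<forall>u<p. phi2 p (a * u mod p) = b * phi2 p u mod p)) \<longleftrightarrow> [a ^ 2 = 1] (mod p)"
proof
  assume "\<exists>b. 0 < b \<and> b < p \<and> (\<forall>u<p. phi2 p (a * u mod p) = b * phi2 p u mod p)"
  then obtain b where b: "0 < b" "b < p" and eq: "\<forall>u<p. phi2 p (a * u mod p) = b * phi2 p u mod p" by blast
  show "[a ^ 2 = 1] (mod p)"
  proof (rule ccontr)
    assume "\<not> [a ^ 2 = 1] (mod p)"
    then have a1: "a \<noteq> 1" "a \<noteq> p - 1" using sq_one_iff[OF p(1) a] by auto
    have "phi2 p (a * 1 mod p) = b * phi2 p 1 mod p" using eq[rule_format, of 1] prime_gt_1_nat[OF p(1)] by simp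
    moreover have "a * 1 mod p = a" using a by simp
    moreover have "phi2 p a = a" using a1 unfolding phi2_def by simp
    moreover have "phi2 p 1 = p - 1" unfolding phi2_def by simp
    ultimately have e1: "a = b * (p - 1) mod p" by simp
    have "(a + b) mod p = (b * (p - 1) mod p + b) mod p" using e1 by simp
    also have "\<dots> = (b * (p - 1) + b) mod p" by (metis mod_add_left_eq)
    also have "b * (p - 1) + b = b * p" using p by (cases p) (auto simp: algebra_simps)
    finally have "p dvd a + b" by (simp add: dvd_eq_mod_eq_0)
    moreover have "a + b < 2 * p" "0 < a + b" using a b by auto
    ultimately have "a + b = p"
    proof -
      assume d: "p dvd a + b" and l: "a + b < 2 * p" "0 < a + b"
      obtain k where k: "a + b = p * k" using d by blast
      have "k \<noteq> 0" using k l by auto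
      moreover have "k < 2"
      proof (rule ccontr)
        assume "\<not> k < 2"
        then have "p * 2 \<le> p * k" by simp
        then show False using k l by simp
      qed
      ultimately have "k = 1" by auto
      then show ?thesis using k by simp
    qed
    then have bpa: "b = p - a" by auto
    have key: "a * u mod p \<noteq> 1 \<and> a * u mod p \<noteq> p - 1 \<Longrightarrow> False" if u: "u = 2 \<or> u = 4" for u
    proof -
      assume h: "a * u mod p \<noteq> 1 \<and> a * u mod p \<noteq> p - 1"
      have "phi2 p (a * u mod p) = b * phi2 p u mod p" using eq u p(2) by auto
      then have "a * u mod p = b * u mod p" using h u p by (auto simp: phi2_def)
      then show False using neg_contra[OF p a, of u] u bpa by auto
    qed
    have c2: "a * 2 mod p = 1 \<or> a * 2 mod p = p - 1" using key[of 2] by auto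
    have "a * 4 mod p = 2 * (a * 2 mod p) mod p" by (simp add: mod_mult_right_eq mult.commute mult.left_commute)
    moreover have "2 * (p - 1) mod p = p - 2"
    proof -
      have "2 * (p - 1) = (p - 2) + 1 * p" using p by auto
      then show ?thesis using p by (metis mod_mult_self1 diff_less less_le_trans mod_less zero_less_numeral)
    qed
    ultimately have "a * 4 mod p = 2 \<or> a * 4 mod p = p - 2" using c2 p by auto
    then have "a * 4 mod p \<noteq> 1 \<and> a * 4 mod p \<noteq> p - 1" using p(2) by auto
    then show False using key[of 4] by auto
  qed
next
  assume "[a ^ 2 = 1] (mod p)"
  then have a1: "a = 1 \<or> a = p - 1" using sq_one_iff[OF p(1) a] by auto
  have "phi2 p (a * u mod p) = a * phi2 p u mod p" if u: "u < p" for u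
    using a1
  proof
    assume "a = 1" then show ?thesis using u phi2_perm[of p] p by auto
  next
    assume ap: "a = p - 1"
    have m: "(p - 1) * w mod p = (if w = 0 then 0 else p - w)" if w: "w < p" for w
    proof (cases "w = 0")
      case False
      have p1: "p - 1 + 1 = p" using p by arith
      have x1: "(p - 1) * w + 1 * w = p * w" unfolding distrib_right[symmetric] p1 ..
      have w1: "w - 1 + 1 = w" using False by arith
      have x2: "(w - 1) * p + 1 * p = p * w" unfolding distrib_right[symmetric] w1 by simp
      have "(p - 1) * w = (p - w) + (w - 1) * p" using x1 x2 w by arith
      then have "(p - 1) * w mod p = (p - w) mod p" by simp
      also have "\<dots> = p - w" using False w by simp
      finally show ?thesis using False by simp
    qed simp
    have p3: "p \<ge> 3" using p by simp
    have pu: "phi2 p u < p" using phi2_perm[OF p3] u by blast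
    show ?thesis unfolding ap m[OF u] m[OF pu] using u p3 by (auto simp: phi2_def)
  qed
  then show "\<exists>b. 0 < b \<and> b < p \<and> (\<forall>u<p. phi2 p (a * u mod p) = b * phi2 p u mod p)" using a by blast
qed



definition phi3 :: "nat \<Rightarrow> nat \<Rightarrow> nat \<Rightarrow> nat \<Rightarrow> nat" where
  "phi3 p e l u = (if [u ^ e = 1] (mod p) then l * u mod p else u)"

lemma pow_cop:
  assumes "e > 0" "[l ^ e = 1] (mod p)"
  shows "coprime l (p::nat)"
proof -
  have "coprime (l ^ e) p" using cong_imp_coprime[OF cong_sym[OF assms(2)]] by simp
  then show ?thesis using assms(1) by simp
qed

lemma mod_cong_self: "[(x::nat) mod p = x] (mod p)"
  by (simp add: cong_def)

lemma phi3_perm: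
  assumes p: "prime p" and e: "e > 0" and l: "[l ^ e = 1] (mod p)"
  shows "inj_on (phi3 p e l) {..<p} \<and> (\<forall>u<p. phi3 p e l u < p)"
proof
  have p0: "p > 0" using p prime_gt_0_nat by blast
  have cl: "coprime l p" by (rule pow_cop[OF e l])
  have noK: False if u: "[u ^ e = 1] (mod p)" and w: "\<not> [w ^ e = 1] (mod p)" and eq: "w = l * u mod p" for u w
  proof -
    have "[w ^ e = (l * u) ^ e] (mod p)" unfolding eq by (rule cong_pow[OF mod_cong_self])
    moreover have "[(l * u) ^ e = 1 * 1] (mod p)" unfolding power_mult_distrib by (rule cong_mult[OF l u])
    ultimately have "[w ^ e = 1 * 1] (mod p)" by (rule cong_trans)
    then show False using w by simp
  qed
  show "inj_on (phi3 p e l) {..<p}"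
  proof (rule inj_onI)
    fix u w assume u: "u \<in> {..<p}" and w: "w \<in> {..<p}" and eq: "phi3 p e l u = phi3 p e l w"
    show "u = w"
    proof (cases "[u ^ e = 1] (mod p)"; cases "[w ^ e = 1] (mod p)")
      assume ku: "[u ^ e = 1] (mod p)" and kw: "[w ^ e = 1] (mod p)"
      then have "l * u mod p = l * w mod p" using eq by (simp add: phi3_def)
      then have "[l * u = l * w] (mod p)" by (simp add: cong_def)
      then have "[u = w] (mod p)" using cong_mult_lcancel_nat[OF cl] by blast
      then show ?thesis using u w by (simp add: cong_def)
    next
      assume ku: "[u ^ e = 1] (mod p)" and kw: "\<not> [w ^ e = 1] (mod p)"
      then have "w = l * u mod p" using eq by (simp add: phi3_def)
      then show ?thesis using noK ku kw by blast
    next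
      assume ku: "\<not> [u ^ e = 1] (mod p)" and kw: "[w ^ e = 1] (mod p)"
      then have "u = l * w mod p" using eq by (simp add: phi3_def)
      then show ?thesis using noK ku kw by blast
    next
      assume ku: "\<not> [u ^ e = 1] (mod p)" and kw: "\<not> [w ^ e = 1] (mod p)"
      then show ?thesis using eq by (simp add: phi3_def)
    qed
  qed
  show "\<forall>u<p. phi3 p e l u < p" using p0 by (simp add: phi3_def)
qed

lemma phi3_char:
  assumes p: "prime p" and e: "e > 0" and l: "[l ^ e = 1] (mod p)" and l2: "\<not> [l ^ 2 = 1] (mod p)"
    and a: "0 < a" "a < p"
  shows "(\<exists>b. 0 < b \<and> b < p \<and> (\<forall>u<p. phi3 p e l (a * u mod p) = b * phi3 p e l u mod p)) \<longleftrightarrow> [a ^ e = 1] (mod p)"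
proof
  have p1: "p > 1" using p prime_gt_1_nat by blast
  assume "\<exists>b. 0 < b \<and> b < p \<and> (\<forall>u<p. phi3 p e l (a * u mod p) = b * phi3 p e l u mod p)"
  then obtain b where b: "0 < b" "b < p" and eq: "\<forall>u<p. phi3 p e l (a * u mod p) = b * phi3 p e l u mod p" by blast
  show "[a ^ e = 1] (mod p)"
  proof (rule ccontr)
    assume na: "\<not> [a ^ e = 1] (mod p)"
    have "phi3 p e l (a * 1 mod p) = b * phi3 p e l 1 mod p" using eq[rule_format, of 1] p1 by simp
    then have "a = b * (l * 1 mod p) mod p" using na a by (simp add: phi3_def)
    then have c1: "[a = b * l] (mod p)" by (simp add: cong_def mod_mult_right_eq)
    have "\<not> p dvd a" using a dvd_imp_le not_le by blast
    then have ca: "coprime a p" using prime_imp_coprime[OF p] coprime_commute by blast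
    obtain a' where a': "[a * a' = 1] (mod p)" using cong_solve_coprime_nat[OF ca] by auto
    define a'' where "a'' = a' mod p"
    have a'': "[a * a'' = 1] (mod p)" using a' unfolding a''_def by (simp add: cong_def mod_mult_right_eq)
    have a''p: "a'' < p" unfolding a''_def using p1 by simp
    have na'': "\<not> [a'' ^ e = 1] (mod p)"
    proof
      assume h: "[a'' ^ e = 1] (mod p)"
      have "[(a * a'') ^ e = 1 ^ e] (mod p)" by (rule cong_pow[OF a''])
      then have "[a ^ e * a'' ^ e = 1] (mod p)" by (simp add: power_mult_distrib)
      moreover have "[a ^ e * a'' ^ e = a ^ e * 1] (mod p)" by (rule cong_scalar_left[OF h])
      moreover have s: "[a ^ e * a'' ^ e = a ^ e] (mod p)" using cong_scalar_left[OF h, of "a ^ e"] by simp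
      ultimately have "[a ^ e = 1] (mod p)" using cong_trans[OF cong_sym[OF s]] by blast
      then show False using na by blast
    qed
    have "phi3 p e l (a * a'' mod p) = b * phi3 p e l a'' mod p" using eq a''p by simp
    moreover have "a * a'' mod p = 1" using a'' p1 by (simp add: cong_def)
    ultimately have "l * 1 mod p = b * a'' mod p" using na'' by (simp add: phi3_def)
    then have c2: "[l = b * a''] (mod p)" by (simp add: cong_def)
    have "[a * l = a * (b * a'')] (mod p)" by (rule cong_scalar_left[OF c2])
    moreover have "[a * (b * a'') = b * 1] (mod p)" using cong_scalar_left[OF a'', of b] by (simp add: ac_simps)
    ultimately have "[a * l = b * 1] (mod p)" by (rule cong_trans)
    then have c3: "[a * l = b] (mod p)" by simp
    have "[a * (l * l) = b * l] (mod p)" using cong_scalar_right[OF c3, of l] by (simp add: ac_simps)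
    then have "[a * (l * l) = a] (mod p)" using cong_trans[OF _ cong_sym[OF c1]] by blast
    then have "[a * (l * l) = a * 1] (mod p)" by simp
    then have "[l * l = 1] (mod p)" using cong_mult_lcancel_nat[OF ca] by blast
    then show False using l2 by (simp add: power2_eq_square)
  qed
next
  assume ae: "[a ^ e = 1] (mod p)"
  have "phi3 p e l (a * u mod p) = a * phi3 p e l u mod p" if u: "u < p" for u
  proof (cases "[u ^ e = 1] (mod p)")
    case True
    have "[(a * u mod p) ^ e = (a * u) ^ e] (mod p)" by (rule cong_pow[OF mod_cong_self])
    moreover have "[(a * u) ^ e = 1 * 1] (mod p)" unfolding power_mult_distrib by (rule cong_mult[OF ae True])
    ultimately have "[(a * u mod p) ^ e = 1 * 1] (mod p)" by (rule cong_trans)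
    then have "[(a * u mod p) ^ e = 1] (mod p)" by simp
    then have "phi3 p e l (a * u mod p) = l * (a * u mod p) mod p" by (simp add: phi3_def)
    also have "\<dots> = a * (l * u mod p) mod p" by (simp only: mod_mult_right_eq mult.left_commute)
    finally show ?thesis using True by (simp add: phi3_def)
  next
    case False
    have "\<not> [(a * u mod p) ^ e = 1] (mod p)"
    proof
      assume h: "[(a * u mod p) ^ e = 1] (mod p)"
      have "[(a * u mod p) ^ e = (a * u) ^ e] (mod p)" by (rule cong_pow[OF mod_cong_self])
      then have "[(a * u) ^ e = 1] (mod p)" using cong_trans[OF cong_sym h] by blast
      then have h2: "[a ^ e * u ^ e = 1] (mod p)" by (simp add: power_mult_distrib)
      have "[a ^ e * u ^ e = 1 * u ^ e] (mod p)" by (rule cong_scalar_right[OF ae])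
      then have "[a ^ e * u ^ e = u ^ e] (mod p)" by simp
      then have "[u ^ e = 1] (mod p)" using cong_trans[OF cong_sym h2] by blast
      then show False using False by blast
    qed
    then show ?thesis using False by (simp add: phi3_def)
  qed
  then show "\<exists>b. 0 < b \<and> b < p \<and> (\<forall>u<p. phi3 p e l (a * u mod p) = b * phi3 p e l u mod p)"
    using a by blast
qed


definition phi :: "nat \<Rightarrow> nat \<Rightarrow> nat \<Rightarrow> nat \<Rightarrow> nat" where
  "phi p r e = (if e = 1 then phi0 else if e = 2 then phi2 p else phi3 p e (r ^ ((p - 1) div e)))"

lemma phi_ok:
  assumes p: "prime p" and p3: "p \<ge> 3" and r: "ord p r = p - 1" and e: "e > 0" "e dvd p - 1"
    and e2: "e = 2 \<longrightarrow> p \<ge> 7"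
  shows "inj_on (phi p r e) {..<p} \<and> (\<forall>u<p. phi p r e u < p) \<and>
    (\<forall>a. 0 < a \<and> a < p \<longrightarrow> ((\<exists>b. 0 < b \<and> b < p \<and> (\<forall>u<p. phi p r e (a * u mod p) = b * phi p r e u mod p)) \<longleftrightarrow> [a ^ e = 1] (mod p)))"
proof -
  consider "e = 1" | "e = 2" | "e \<ge> 3" using e(1) by linarith
  then show ?thesis
  proof cases
    case 1
    have ph: "phi p r 1 = phi0" unfolding phi_def by simp
    have p2: "p \<ge> 2" using p3 by simp
    show ?thesis unfolding 1 ph
      apply (intro conjI)
        apply (rule conjunct1[OF phi0_perm[OF p2]])
       apply (rule conjunct2[OF phi0_perm[OF p2]])
      apply (intro allI impI)
      apply (rule phi0_char[OF p2])
       apply auto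
      done
  next
    case 2
    then have p7: "p \<ge> 7" using e2 by simp
    have ph: "phi p r 2 = phi2 p" unfolding phi_def by simp
    show ?thesis unfolding 2 ph
      apply (intro conjI)
        apply (rule conjunct1[OF phi2_perm[OF p3]])
       apply (rule conjunct2[OF phi2_perm[OF p3]])
      apply (intro allI impI)
      apply (rule phi2_char[OF p p7])
       apply auto
      done
  next
    case 3
    define k where "k = (p - 1) div e"
    have pk: "p - 1 = k * e" unfolding k_def using e(2) by simp
    have p1: "p - 1 > 0" using p3 by simp
    have k0: "k > 0" using pk p1 by (cases k) auto
    have l: "[(r ^ k) ^ e = 1] (mod p)" unfolding power_mult[symmetric] pk[symmetric] ord_divides r by simp
    have "k * 2 < k * e" using k0 3 by simp
    then have "\<not> (p - 1) dvd k * 2" unfolding pk using k0 by (auto dest: dvd_imp_le)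
    then have l2: "\<not> [(r ^ k) ^ 2 = 1] (mod p)" unfolding power_mult[symmetric] ord_divides r .
    have ph: "phi p r e = phi3 p e (r ^ k)" using 3 unfolding phi_def k_def by simp
    show ?thesis unfolding ph
      apply (intro conjI)
        apply (rule conjunct1[OF phi3_perm[OF p e(1) l]])
       apply (rule conjunct2[OF phi3_perm[OF p e(1) l]])
      apply (intro allI impI)
      apply (rule phi3_char[OF p e(1) l l2])
       apply auto
      done
  qed
qed

lemma X_char:
  assumes p: "prime p" and p3: "p \<ge> 3" and r: "ord p r = p - 1" and e: "e > 0" "e dvd p - 1"
    and e2: "e = 2 \<longrightarrow> p \<ge> 7" and c: "c < d"
  shows "cx p d c (phi p r e) \<in> carrier (SymV p d) \<and>
    (\<forall>a. (\<forall>i<d. 0 < a i \<and> a i < p) \<longrightarrow>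
       (dg p d a \<in> conjg (SymV p d) (diagT p d) (cx p d c (phi p r e)) \<longleftrightarrow> [a c ^ e = 1] (mod p)))"
proof -
  note ok = phi_ok[OF p p3 r e e2]
  have "cx p d c (phi p r e) \<in> carrier (SymV p d)"
    using cx_Bij[OF c] ok by (simp add: BijGroup_def)
  moreover have "dg p d a \<in> conjg (SymV p d) (diagT p d) (cx p d c (phi p r e)) \<longleftrightarrow> [a c ^ e = 1] (mod p)"
    if a: "\<forall>i<d. 0 < a i \<and> a i < p" for a
  proof -
    have ac: "0 < a c \<and> a c < p" using a c by blast
    have "dg p d a \<in> conjg (SymV p d) (diagT p d) (cx p d c (phi p r e)) \<longleftrightarrow>
         (\<exists>b. 0 < b \<and> b < p \<and> (\<forall>u<p. phi p r e (a c * u mod p) = b * phi p r e u mod p))"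
      using ok by (intro conj_cx[OF p c _ _ a]) auto
    also have "\<dots> \<longleftrightarrow> [a c ^ e = 1] (mod p)" using ok ac by simp
    finally show ?thesis .
  qed
  ultimately show ?thesis by blast
qed



lemma dg_uniq:
  assumes "p > 1" "dg p d a = dg p d a'" "i < d"
    "\<forall>i<d. 0 < a i \<and> a i < p" "\<forall>i<d. 0 < a' i \<and> a' i < p"
  shows "a i = a' i"
proof -
  define v where "v = (\<lambda>j. if j = i then 1 else (0::nat))"
  have v: "v \<in> vecsp p d" using assms(1,3) unfolding v_def vecsp_def by auto
  have "dg p d a v i = dg p d a' v i" using assms(2) by simp
  then have "a i * 1 mod p = a' i * 1 mod p" using v unfolding dg_def v_def by simp
  then show ?thesis using assms(3,4,5) by simp
qed

lemma dg_one:
  assumes "p > 1" "\<forall>i<d. a i = 1"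
  shows "dg p d a = \<one>\<^bsub>SymV p d\<^esub>"
proof -
  have "(\<lambda>i. (a i * v i) mod p) = v" if v: "v \<in> vecsp p d" for v
  proof
    fix i show "a i * v i mod p = v i"
    proof (cases "i < d")
      case True
      then show ?thesis using v assms unfolding vecsp_def by simp
    next
      case False
      then show ?thesis using v unfolding vecsp_def by simp
    qed
  qed
  then show ?thesis unfolding dg_def BijGroup_def by (simp add: restrict_eq_iff)
qed

lemma conj_one:
  assumes "prime p" "g \<in> carrier (SymV p d)"
  shows "g \<in> conjg (SymV p d) (diagT p d) \<one>\<^bsub>SymV p d\<^esub> \<longleftrightarrow> g \<in> diagT p d"
proof -
  have grp: "group (SymV p d)" by (rule group_BijGroup)
  have T: "diagT p d \<subseteq> carrier (SymV p d)" by (rule diagT_sub[OF assms(1)])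
  have "g \<in> conjg (SymV p d) (diagT p d) \<one>\<^bsub>SymV p d\<^esub> \<longleftrightarrow>
    (\<exists>h\<in>diagT p d. \<one>\<^bsub>SymV p d\<^esub> \<otimes>\<^bsub>SymV p d\<^esub> g = h \<otimes>\<^bsub>SymV p d\<^esub> \<one>\<^bsub>SymV p d\<^esub>)"
    by (rule conjg_iff[OF grp T group.is_monoid[OF grp, THEN monoid.one_closed] assms(2)])
  also have "\<dots> \<longleftrightarrow> (\<exists>h\<in>diagT p d. g = h)"
    using T assms(2) group.is_monoid[OF grp] by (metis (no_types, lifting) monoid.l_one monoid.r_one subsetD)
  finally show ?thesis by blast
qed



lemma chain:
  fixes p d r L :: nat and qs :: "nat list"
  assumes p: "prime p" and p3: "p \<ge> 3" and d: "d \<ge> 1" and r: "ord p r = p - 1"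
    and qs2: "\<forall>q\<in>set qs. q \<ge> 2" and qsp: "prod_list qs = p - 1" and qsne: "qs \<noteq> []"
    and cond: "p \<ge> 7 \<or> length qs = 1" and L: "L = d * length qs"
  shows "\<exists>Y :: nat \<Rightarrow> ((nat \<Rightarrow> nat) \<Rightarrow> (nat \<Rightarrow> nat)) set.
           (\<forall>i\<in>{1..L}. Y i \<subseteq> carrier (SymV p d)) \<and>
           interconj (SymV p d) (diagT p d) (Y 1) \<subset> diagT p d \<and>
           (\<forall>i\<in>{1..<L}. interconj (SymV p d) (diagT p d) (Y (Suc i))
                          \<subset> interconj (SymV p d) (diagT p d) (Y i)) \<and>
           interconj (SymV p d) (diagT p d) (Y L) = {\<one>\<^bsub>SymV p d\<^esub>}"
proof -
  define m where "m = length qs"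
  define E where "E j = prod_list (drop j qs)" for j
  have p1: "p > 1" using p3 by simp
  have m0: "m > 0" using qsne unfolding m_def by simp
  have E0: "E 0 = p - 1" unfolding E_def using qsp by simp
  have Em: "E m = 1" unfolding E_def m_def by simp
  have ES: "E j = qs ! j * E (Suc j)" if "j < m" for j
    using that unfolding E_def m_def by (simp flip: Cons_nth_drop_Suc)
  have Estep: "E (Suc k) dvd E k" for k
  proof (cases "k < m")
    case True then show ?thesis using ES by simp
  next
    case False then show ?thesis unfolding E_def m_def by simp
  qed
  have Edvd: "E k dvd E j" if "j \<le> k" for j k
    using that
  proof (induction k)
    case 0 then show ?case by simp
  next
    case (Suc k)
    show ?case
    proof (cases "j = Suc k")
      case False
      then have "j \<le> k" using Suc.prems by simp
      then show ?thesis using Suc.IH Estep dvd_trans by blast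
    qed simp
  qed
  have Edp: "E j dvd p - 1" for j using Edvd[of 0 j] E0 by simp
  have Epos: "E j > 0" for j using Edp[of j] p3 by (cases "E j = 0") auto
  have Elt: "E (Suc j) < E j" if "j < m" for j
  proof -
    have "qs ! j \<ge> 2" using qs2 that unfolding m_def by simp
    then show ?thesis using ES[OF that] Epos[of "Suc j"] by simp
  qed
  have Econd: "E (Suc j) = 2 \<longrightarrow> p \<ge> 7" if "j < m" for j
  proof (cases "p \<ge> 7")
    case False
    then have "m = 1" using cond unfolding m_def by simp
    then have "j = 0" using that by simp
    then show ?thesis using Em \<open>m = 1\<close> by simp
  qed simp
  define Xf where "Xf c j = cx p d c (phi p r (E (Suc j)))" for c j
  have Xok: "Xf c j \<in> carrier (SymV p d) \<and>
    (\<forall>a. (\<forall>i<d. 0 < a i \<and> a i < p) \<longrightarrow>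
       (dg p d a \<in> conjg (SymV p d) (diagT p d) (Xf c j) \<longleftrightarrow> [a c ^ E (Suc j) = 1] (mod p)))"
    if "c < d" "j < m" for c j
    unfolding Xf_def by (rule X_char[OF p p3 r Epos Edp Econd[OF that(2)] that(1)])
  define Y where "Y k = insert \<one>\<^bsub>SymV p d\<^esub> {Xf c j | c j. c < d \<and> j < m \<and> c * m + j < k}" for k
  define P where "P k a \<longleftrightarrow> (\<forall>c j. c < d \<and> j < m \<and> c * m + j < k \<longrightarrow> [a c ^ E (Suc j) = 1] (mod p))"
    for k and a :: "nat \<Rightarrow> nat"
  have one_c: "\<one>\<^bsub>SymV p d\<^esub> \<in> carrier (SymV p d)"
    by (rule monoid.one_closed[OF group.is_monoid[OF group_BijGroup]])
  have Ysub: "Y k \<subseteq> carrier (SymV p d)" for k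
    unfolding Y_def using one_c Xok by auto
  have char: "g \<in> interconj (SymV p d) (diagT p d) (Y k) \<longleftrightarrow>
      (\<exists>a. (\<forall>i<d. 0 < a i \<and> a i < p) \<and> g = dg p d a \<and> P k a)" for g k
  proof
    assume g: "g \<in> interconj (SymV p d) (diagT p d) (Y k)"
    then have gc: "g \<in> carrier (SymV p d)" and gY: "\<forall>x\<in>Y k. g \<in> conjg (SymV p d) (diagT p d) x"
      unfolding interconj_def by auto
    have "g \<in> diagT p d" using gY conj_one[OF p gc] unfolding Y_def by blast
    then obtain a where a: "\<forall>i<d. 0 < a i \<and> a i < p" and ga: "g = dg p d a"
      unfolding diagT_dg by blast
    have "P k a" unfolding P_def
    proof (intro allI impI)
      fix c j assume cj: "c < d \<and> j < m \<and> c * m + j < k"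
      then have "Xf c j \<in> Y k" unfolding Y_def by blast
      then have "g \<in> conjg (SymV p d) (diagT p d) (Xf c j)" using gY by blast
      then show "[a c ^ E (Suc j) = 1] (mod p)" using Xok[of c j] cj a ga by blast
    qed
    then show "\<exists>a. (\<forall>i<d. 0 < a i \<and> a i < p) \<and> g = dg p d a \<and> P k a" using a ga by blast
  next
    assume "\<exists>a. (\<forall>i<d. 0 < a i \<and> a i < p) \<and> g = dg p d a \<and> P k a"
    then obtain a where a: "\<forall>i<d. 0 < a i \<and> a i < p" and ga: "g = dg p d a" and Pa: "P k a" by blast
    have gT: "g \<in> diagT p d" unfolding diagT_dg using a ga by blast
    then have gc: "g \<in> carrier (SymV p d)" using diagT_sub[OF p] by blast
    have "g \<in> conjg (SymV p d) (diagT p d) x" if x: "x \<in> Y k" for x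
    proof -
      consider "x = \<one>\<^bsub>SymV p d\<^esub>" | c j where "c < d" "j < m" "c * m + j < k" "x = Xf c j"
        using x unfolding Y_def by blast
      then show ?thesis
      proof cases
        case 1 then show ?thesis using conj_one[OF p gc] gT by simp
      next
        case 2
        then have "[a c ^ E (Suc j) = 1] (mod p)" using Pa unfolding P_def by blast
        then show ?thesis using Xok[OF 2(1,2)] a ga 2(4) by blast
      qed
    qed
    then show "g \<in> interconj (SymV p d) (diagT p d) (Y k)" unfolding interconj_def using gc by blast
  qed
  define S where "S k = interconj (SymV p d) (diagT p d) (Y k)" for k
  have P0: "P 0 a" for a unfolding P_def by simp
  have S0i: "g \<in> S 0 \<longleftrightarrow> g \<in> diagT p d" for g
  proof -
    have "g \<in> S 0 \<longleftrightarrow> (\<exists>a. (\<forall>i<d. 0 < a i \<and> a i < p) \<and> g = dg p d a)"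
      unfolding S_def char using P0 by blast
    also have "\<dots> \<longleftrightarrow> g \<in> diagT p d" unfolding diagT_dg by blast
    finally show "g \<in> S 0 \<longleftrightarrow> g \<in> diagT p d" .
  qed
  have S0: "S 0 = diagT p d" using S0i by blast
  have Sfin: "S (d * m) = {\<one>\<^bsub>SymV p d\<^esub>}"
  proof
    show "S (d * m) \<subseteq> {\<one>\<^bsub>SymV p d\<^esub>}"
    proof
      fix g assume "g \<in> S (d * m)"
      then obtain a where a: "\<forall>i<d. 0 < a i \<and> a i < p" and ga: "g = dg p d a" and Pa: "P (d * m) a"
        unfolding S_def char by blast
      have "a c = 1" if c: "c < d" for c
      proof -
        have "Suc c * m \<le> d * m" using c by (intro mult_le_mono1) simp
        then have "c * m + (m - 1) < d * m" using m0 by simp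
        moreover have "m - 1 < m" using m0 by simp
        ultimately have "[a c ^ E (Suc (m - 1)) = 1] (mod p)" using Pa[unfolded P_def, rule_format, of c "m - 1"] c by blast
        moreover have "Suc (m - 1) = m" using m0 by simp
        ultimately have "[a c = 1] (mod p)" using Em by simp
        then show ?thesis using a c p1 unfolding cong_def by simp
      qed
      then have "\<forall>i<d. a i = 1" by blast
      then have "dg p d a = \<one>\<^bsub>SymV p d\<^esub>" by (rule dg_one[OF p1])
      then show "g \<in> {\<one>\<^bsub>SymV p d\<^esub>}" using ga by simp
    qed
  next
    have "\<one>\<^bsub>SymV p d\<^esub> = dg p d (\<lambda>_. 1)" by (rule dg_one[OF p1, symmetric]) simp
    moreover have "P (d * m) (\<lambda>_. 1)" unfolding P_def by simp
    moreover have "\<forall>i<d. 0 < (1::nat) \<and> (1::nat) < p" using p1 by simp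
    ultimately have "\<exists>a. (\<forall>i<d. 0 < a i \<and> a i < p) \<and> \<one>\<^bsub>SymV p d\<^esub> = dg p d a \<and> P (d * m) a"
      by (intro exI[of _ "\<lambda>_. 1"] conjI)
    then have "\<one>\<^bsub>SymV p d\<^esub> \<in> S (d * m)" unfolding S_def char .
    then show "{\<one>\<^bsub>SymV p d\<^esub>} \<subseteq> S (d * m)" by simp
  qed
  have Sstrict: "S (Suc k) \<subset> S k" if k: "k < d * m" for k
  proof
    show "S (Suc k) \<subseteq> S k"
    proof
      fix g assume "g \<in> S (Suc k)"
      then obtain a where a: "\<forall>i<d. 0 < a i \<and> a i < p" and ga: "g = dg p d a" and Pa: "P (Suc k) a"
        unfolding S_def char by blast
      have "P k a" using Pa unfolding P_def by (simp add: less_SucI)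
      then show "g \<in> S k" unfolding S_def char using a ga by blast
    qed
    define c0 where "c0 = k div m"
    define j0 where "j0 = k mod m"
    have kc: "k = c0 * m + j0" unfolding c0_def j0_def by simp
    have c0: "c0 < d" unfolding c0_def using k m0 by (simp add: div_less_iff_less_mult)
    have j0: "j0 < m" unfolding j0_def using m0 by simp
    define x where "x = (p - 1) div E j0"
    have px: "x * E j0 = p - 1" unfolding x_def using Edp[of j0] by simp
    define g0 where "g0 = r ^ x mod p"
    have g0pow: "[g0 ^ n = r ^ (x * n)] (mod p)" for n
      unfolding g0_def power_mult by (rule cong_pow[OF mod_cong_self])
    have g0E: "[g0 ^ E j0 = 1] (mod p)"
    proof -
      have "[r ^ (x * E j0) = 1] (mod p)" unfolding px ord_divides r by simp
      then show ?thesis by (rule cong_trans[OF g0pow])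
    qed
    have g0lt: "[g0 ^ E (Suc j) = 1] (mod p)" if "j < j0" for j
    proof -
      have "E j0 dvd E (Suc j)" using Edvd[of "Suc j" j0] that by simp
      then obtain t where t: "E (Suc j) = E j0 * t" unfolding dvd_def by blast
      have "[(g0 ^ E j0) ^ t = 1 ^ t] (mod p)" by (rule cong_pow[OF g0E])
      then show ?thesis unfolding t power_mult by simp
    qed
    have g0n: "\<not> [g0 ^ E (Suc j0) = 1] (mod p)"
    proof
      assume h: "[g0 ^ E (Suc j0) = 1] (mod p)"
      then have "[r ^ (x * E (Suc j0)) = 1] (mod p)" by (rule cong_trans[OF cong_sym[OF g0pow]])
      then have dv: "(p - 1) dvd x * E (Suc j0)" unfolding ord_divides r .
      have x0: "x > 0" using px p3 by (cases x) auto
      have "x * E (Suc j0) < x * E j0" using Elt[OF j0] x0 by simp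
      moreover have "x * E (Suc j0) > 0" using x0 Epos by simp
      ultimately show False using dv px by (auto dest: dvd_imp_le)
    qed
    have g0pos: "0 < g0"
    proof (rule ccontr)
      assume "\<not> 0 < g0"
      then have "g0 = 0" by simp
      then have "[0 = 1] (mod p)" using g0E Epos[of j0] by (simp add: zero_power)
      then show False using p1 unfolding cong_def by simp
    qed
    have g0p: "g0 < p" unfolding g0_def using p1 by simp
    define a0 where "a0 = (\<lambda>i. if i = c0 then g0 else 1)"
    have a0: "\<forall>i<d. 0 < a0 i \<and> a0 i < p" unfolding a0_def using g0pos g0p p1 by simp
    have P0: "P k a0" unfolding P_def
    proof (intro allI impI)
      fix c j assume cj: "c < d \<and> j < m \<and> c * m + j < k"
      show "[a0 c ^ E (Suc j) = 1] (mod p)"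
      proof (cases "c = c0")
        case True
        then have "j < j0" using cj kc by simp
        then show ?thesis using g0lt True unfolding a0_def by simp
      next
        case False
        then show ?thesis unfolding a0_def by simp
      qed
    qed
    have "\<exists>a. (\<forall>i<d. 0 < a i \<and> a i < p) \<and> dg p d a0 = dg p d a \<and> P k a"
      using a0 P0 by (intro exI[of _ a0] conjI) auto
    then have in0: "dg p d a0 \<in> S k" unfolding S_def char .
    have nin: "dg p d a0 \<notin> S (Suc k)"
    proof
      assume "dg p d a0 \<in> S (Suc k)"
      then obtain a where a: "\<forall>i<d. 0 < a i \<and> a i < p" and ga: "dg p d a0 = dg p d a" and Pa: "P (Suc k) a"
        unfolding S_def char by blast
      have "a c0 = a0 c0" using dg_uniq[OF p1 ga c0 a0 a] by simp
      then have "a c0 = g0" unfolding a0_def by simp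
      moreover have "[a c0 ^ E (Suc j0) = 1] (mod p)" using Pa c0 j0 kc unfolding P_def by simp
      ultimately show False using g0n by simp
    qed
    show "S (Suc k) \<noteq> S k" using in0 nin by blast
  qed
  show ?thesis
  proof (intro exI[of _ Y] conjI)
    show "\<forall>i\<in>{1..L}. Y i \<subseteq> carrier (SymV p d)" using Ysub by blast
    have "0 < d * m" using d m0 by simp
    then show "interconj (SymV p d) (diagT p d) (Y 1) \<subset> diagT p d"
      using Sstrict[of 0] S0 unfolding S_def by simp
    show "\<forall>i\<in>{1..<L}. interconj (SymV p d) (diagT p d) (Y (Suc i)) \<subset> interconj (SymV p d) (diagT p d) (Y i)"
    proof
      fix i assume "i \<in> {1..<L}"
      then have "i < d * m" unfolding L m_def by simp
      then show "interconj (SymV p d) (diagT p d) (Y (Suc i)) \<subset> interconj (SymV p d) (diagT p d) (Y i)"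
        using Sstrict unfolding S_def by blast
    qed
    show "interconj (SymV p d) (diagT p d) (Y L) = {\<one>\<^bsub>SymV p d\<^esub>}"
      using Sfin unfolding S_def L m_def .
  qed
qed



theorem lemma3p7:
  fixes p d :: nat
  assumes "prime p" and "p \<ge> 3" and "d \<ge> 1" and "p ^ d \<ge> 7"
  defines "l2 \<equiv> (if p \<in> {3, 5} then d else d * bigOmega (p - 1))"
  shows "\<exists>Y :: nat \<Rightarrow> ((nat \<Rightarrow> nat) \<Rightarrow> (nat \<Rightarrow> nat)) set.
           (\<forall>i\<in>{1..l2}. Y i \<subseteq> carrier (SymV p d)) \<and>
           interconj (SymV p d) (diagT p d) (Y 1) \<subset> diagT p d \<and>
           (\<forall>i\<in>{1..<l2}. interconj (SymV p d) (diagT p d) (Y (Suc i))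
                          \<subset> interconj (SymV p d) (diagT p d) (Y i)) \<and>
           interconj (SymV p d) (diagT p d) (Y l2) = {\<one>\<^bsub>SymV p d\<^esub>}"
proof -
  obtain r where r: "ord p r = p - 1" using residue_prime_has_primroot[OF assms(1)] by blast
  show ?thesis
  proof (cases "p \<in> {3, 5}")
    case True
    have l: "l2 = d * length [p - 1]" using True unfolding l2_def by simp
    show ?thesis
    proof (rule chain[OF assms(1,2,3) r _ _ _ _ l])
      show "\<forall>q\<in>set [p - 1]. q \<ge> 2" using assms(2) by simp
    qed simp_all
  next
    case False
    have p7: "p \<ge> 7"
    proof (rule ccontr)
      assume "\<not> p \<ge> 7"
      then have "p = 4 \<or> p = 6" using False assms(2) by auto
      moreover have "odd p" using prime_odd_nat[OF assms(1)] assms(2) by simp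
      ultimately show False by auto
    qed
    obtain qs where qs: "mset qs = prime_factorization (p - 1)" using ex_mset by blast
    have p10: "p - 1 > 0" using assms(2) by simp
    have "prod_list qs = prod_mset (mset qs)" by (rule prod_mset_prod_list[symmetric])
    also have "\<dots> = prod_mset (prime_factorization (p - 1))" unfolding qs ..
    also have "\<dots> = p - 1" by (rule prod_mset_prime_factorization_nat[OF p10])
    finally have pp: "prod_list qs = p - 1" .
    have q2: "\<forall>q\<in>set qs. q \<ge> 2"
    proof
      fix q assume "q \<in> set qs"
      then have "q \<in># prime_factorization (p - 1)" using qs by (metis set_mset_mset)
      then have "prime q" by (rule in_prime_factors_imp_prime)
      then show "q \<ge> 2" by (rule prime_ge_2_nat)
    qed
    have ne: "qs \<noteq> []"
    proof
      assume "qs = []"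
      then have "p - 1 = 1" using pp by simp
      then show False using assms(2) by simp
    qed
    have sz: "size (prime_factorization (p - 1)) = length qs" by (metis qs size_mset)
    have l: "l2 = d * length qs" using False sz unfolding l2_def bigOmega_def by simp
    show ?thesis by (rule chain[OF assms(1,2,3) r q2 pp ne _ l]) (use p7 in simp)
  qed
qed

end
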